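(* Let $(X,d)$ be a metric space and let $T,f,g:X\to X$ be selfmaps such that $T$ is $(f,g)$-weakly contractive, i.e. there exists $\psi\in\Psi$ with \[d(Tx,Ty)\leq\min\{d(fx,gy)-\psi(d(fx,gy)),\ d(gx,fy)-\psi(d(gx,fy))\}\quad\text{for all }x,y\in X.\] Suppose the pairs $(T,f)$ and $(T,g)$ are weakly compatible, $\overline{T(X)}\subseteq f(X)$, $\overline{T(X)}\subseteq g(X)$, and $\overline{T(X)}$ is a complete subspace of $X$. Then $T$, $f$ and $g$ have a unique common fixed point in $X$.
   Context: $R_+=[0,\infty)$. $\Psi$ denotes the set of all functions $\psi:R_+\to R_+$ that are continuous and nondecreasing on $R_+$, with $\psi(t)>0$ for $t>0$, $\psi(0)=0$ and $\lim_{t\to\infty}\psi(t)=\infty$. A pair $(T,f)$ of selfmaps of $X$ is weakly compatible if $T$ and $f$ commute at their coincidence points, i.e. $Tx=fx$ implies $T(fx)=f(Tx)$. $\overline{T(X)}$ is the closure of $T(X)$ in $X$. *)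

theory Defs
  imports "HOL-Analysis.Analysis"
begin

definition Psi :: "(real \<Rightarrow> real) set" where
  "Psi = {\<psi>. (\<forall>t\<ge>0. \<psi> t \<ge> 0) \<and> continuous_on {0..} \<psi> \<and> mono_on {0..} \<psi>
              \<and> (\<forall>t>0. \<psi> t > 0) \<and> \<psi> 0 = 0 \<and> filterlim \<psi> at_top at_top}"

definition weakly_compatible :: "('a \<Rightarrow> 'a) \<Rightarrow> ('a \<Rightarrow> 'a) \<Rightarrow> bool" where
  "weakly_compatible T f \<longleftrightarrow> (\<forall>x. T x = f x \<longrightarrow> T (f x) = f (T x))"

definition fg_weakly_contractive ::
  "('a::metric_space \<Rightarrow> 'a) \<Rightarrow> ('a \<Rightarrow> 'a) \<Rightarrow> ('a \<Rightarrow> 'a) \<Rightarrow> bool" where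
  "fg_weakly_contractive T f g \<longleftrightarrow> (\<exists>\<psi>\<in>Psi. \<forall>x y.
     dist (T x) (T y) \<le> min (dist (f x) (g y) - \<psi> (dist (f x) (g y)))
                              (dist (g x) (f y) - \<psi> (dist (g x) (f y))))"

end

theory Submission
  imports Defs
begin

theorem theorem2p1:
  fixes T f g :: "'a::metric_space \<Rightarrow> 'a"
  assumes "fg_weakly_contractive T f g"
    and "weakly_compatible T f" and "weakly_compatible T g"
    and "closure (range T) \<subseteq> range f" and "closure (range T) \<subseteq> range g"
    and "complete (closure (range T))"
  shows "\<exists>!z. T z = z \<and> f z = z \<and> g z = z"
proof -
  define C where "C = closure (range T)"
  obtain \<psi> where psi: "\<psi> \<in> Psi" and contr: "\<And>x y.
     dist (T x) (T y) \<le> min (dist (f x) (g y) - \<psi> (dist (f x) (g y)))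
                              (dist (g x) (f y) - \<psi> (dist (g x) (f y)))"
    using assms(1) unfolding fg_weakly_contractive_def by blast
  have ps0: "\<psi> 0 = 0" and pspos: "\<And>t. t > 0 \<Longrightarrow> \<psi> t > 0"
    and psmono: "mono_on {0..} \<psi>" using psi unfolding Psi_def by auto
  have K1: "dist (T x) (T y) \<le> dist (f x) (g y) - \<psi> (dist (f x) (g y))" for x y
    using contr[of x y] by linarith
  have K2: "dist (T x) (T y) \<le> dist (g x) (f y) - \<psi> (dist (g x) (f y))" for x y
    using contr[of x y] by linarith
  have zero: "d = 0" if "(d::real) \<ge> 0" "d \<le> d - \<psi> d" for d
    using that pspos[of d] by force
  define a where "a p = (SOME x. f x = p)" for p
  define b where "b p = (SOME x. g x = p)" for p
  have fa: "f (a p) = p" if "p \<in> C" for p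
    using that assms(4) unfolding a_def C_def by (metis (mono_tags, lifting) imageE someI subsetD)
  have gb: "g (b p) = p" if "p \<in> C" for p
    using that assms(5) unfolding b_def C_def by (metis (mono_tags, lifting) imageE someI subsetD)
  define S where "S p = T (a p)" for p
  have SC: "S p \<in> C" for p unfolding S_def C_def by (simp add: closure_subset[THEN subsetD])
  have Tab: "T (a p) = T (b p)" if "p \<in> C" for p
    using K1[of "a p" "b p"] fa[OF that] gb[OF that] ps0 by simp
  have Scontr: "dist (S p) (S q) \<le> dist p q - \<psi> (dist p q)" if "p \<in> C" "q \<in> C" for p q
    using K1[of "a p" "b q"] fa[OF that(1)] gb[OF that(2)] Tab[OF that(2)] unfolding S_def by simp
  have Sne: "dist (S p) (S q) \<le> dist p q" if "p \<in> C" "q \<in> C" for p q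
  proof -
    have "\<psi> (dist p q) \<ge> 0"
      using mono_onD[OF psmono, of 0 "dist p q"] ps0 by simp
    thus ?thesis using Scontr[OF that] by linarith
  qed
  define y where "y n = (S ^^ n) (S (T undefined))" for n
  have ySuc: "y (Suc n) = S (y n)" for n unfolding y_def by simp
  have yC: "y n \<in> C" for n by (cases n) (auto simp: y_def SC)
  define d where "d n = dist (y n) (y (Suc n))" for n
  have dstep: "d (Suc n) \<le> d n - \<psi> (d n)" for n
    unfolding d_def using Scontr[OF yC yC, of n "Suc n"] ySuc by simp
  have small: "\<exists>N. d N < \<delta>" if "\<delta> > 0" for \<delta>
  proof (rule ccontr)
    assume "\<not> ?thesis"
    hence ge: "d n \<ge> \<delta>" for n by (simp add: not_less)
    have pd: "\<psi> \<delta> > 0" using pspos that by simp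
    have bound: "d n \<le> d 0 - real n * \<psi> \<delta>" for n
    proof (induction n)
      case 0 then show ?case by simp
    next
      case (Suc n)
      have "\<psi> \<delta> \<le> \<psi> (d n)" using mono_onD[OF psmono, of \<delta> "d n"] ge[of n] that by simp
      with dstep[of n] Suc show ?case by (simp add: algebra_simps)
    qed
    obtain n where "real n * \<psi> \<delta> > d 0" using reals_Archimedean3[OF pd] by blast
    with bound[of n] ge[of n] that show False by linarith
  qed
  have Cau: "Cauchy y"
  proof (rule metric_CauchyI)
    fix e :: real assume e: "e > 0"
    define \<epsilon> where "\<epsilon> = e / 3"
    have ep: "\<epsilon> > 0" using e by (simp add: \<epsilon>_def)
    define \<delta> where "\<delta> = min (\<psi> (\<epsilon>/2)) (\<epsilon>/2)"
    have dp: "\<delta> > 0" using ep pspos[of "\<epsilon>/2"] by (simp add: \<delta>_def)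
    obtain N where N: "d N < \<delta>" using small[OF dp] by blast
    have inball: "dist (y n) (y N) \<le> \<epsilon>" if "n \<ge> N" for n
      using that
    proof (induction n rule: dec_induct)
      case base then show ?case using ep by simp
    next
      case (step n)
      have tri: "dist (y (Suc n)) (y N) \<le> dist (S (y n)) (S (y N)) + d N"
        unfolding d_def ySuc using dist_triangle[of "S (y n)" "y N" "S (y N)"]
        by (simp add: dist_commute)
      show ?case
      proof (cases "dist (y n) (y N) \<ge> \<epsilon>/2")
        case True
        have "\<psi> (\<epsilon>/2) \<le> \<psi> (dist (y n) (y N))"
          using mono_onD[OF psmono, of "\<epsilon>/2" "dist (y n) (y N)"] True ep by simp
        moreover have "\<delta> \<le> \<psi> (\<epsilon>/2)" by (simp add: \<delta>_def)
        ultimately show ?thesis using tri Scontr[OF yC yC, of n N] step.IH N by linarith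
      next
        case False
        moreover have "\<delta> \<le> \<epsilon>/2" by (simp add: \<delta>_def)
        ultimately show ?thesis using tri Sne[OF yC yC, of n N] N by linarith
      qed
    qed
    show "\<exists>M. \<forall>m\<ge>M. \<forall>n\<ge>M. dist (y m) (y n) < e"
    proof (intro exI allI impI)
      fix m n assume "m \<ge> N" "n \<ge> N"
      hence "dist (y m) (y N) \<le> \<epsilon>" "dist (y n) (y N) \<le> \<epsilon>" using inball by auto
      hence "dist (y m) (y n) \<le> 2 * \<epsilon>"
        using dist_triangle[of "y m" "y n" "y N"] by (simp add: dist_commute)
      thus "dist (y m) (y n) < e" using ep by (simp add: \<epsilon>_def)
    qed
  qed
  obtain z where zC: "z \<in> C" and lim: "y \<longlonglongrightarrow> z"
    using assms(6) Cau yC unfolding complete_def C_def by blast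
  have lim2: "(\<lambda>n. y (Suc n)) \<longlonglongrightarrow> S z"
  proof -
    have "(\<lambda>n. dist (y n) z) \<longlonglongrightarrow> 0" using lim tendsto_dist_iff by blast
    moreover have "norm (dist (y (Suc n)) (S z)) \<le> dist (y n) z" for n
      using Sne[OF yC zC, of n] ySuc by simp
    ultimately have "(\<lambda>n. dist (y (Suc n)) (S z)) \<longlonglongrightarrow> 0"
      using Lim_null_comparison[of "\<lambda>n. dist (y (Suc n)) (S z)" "\<lambda>n. dist (y n) z"]
      by (simp add: always_eventually)
    thus ?thesis using tendsto_dist_iff by blast
  qed
  have Sz: "S z = z"
    using LIMSEQ_unique[OF lim2 LIMSEQ_Suc[OF lim]] by simp
  define u where "u = a z"
  define v where "v = b z"
  have Tu: "T u = z" "f u = z" using Sz fa[OF zC] unfolding S_def u_def by auto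
  have Tv: "T v = z" "g v = z" using Sz Tab[OF zC] gb[OF zC] unfolding S_def v_def by auto
  have Tzf: "T z = f z" using assms(2) Tu unfolding weakly_compatible_def by metis
  have Tzg: "T z = g z" using assms(3) Tv unfolding weakly_compatible_def by metis
  have "dist (T z) z = 0"
    using K2[of z u] Tu Tzg zero[of "dist (T z) z"] by simp
  hence Tz: "T z = z" by simp
  show ?thesis
  proof (rule ex1I[of _ z])
    show "T z = z \<and> f z = z \<and> g z = z" using Tz Tzf Tzg by simp
  next
    fix w assume w: "T w = w \<and> f w = w \<and> g w = w"
    have "dist w z = 0"
      using K1[of w z] w Tz Tzg zero[of "dist w z"] by simp
    thus "w = z" by simp
  qed
qed

end
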